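(* Let $\varepsilon\in(0,1]$, $\mathrm{Bo}>0$, $\nu,t\geq0$, and let $f,\zeta^{\rm app}\in\mathbb{A}^4_{\nu t}$; set $\zeta^{\rm MU}:=\zeta^{\rm app}+f$. Define $$N_1(f,\zeta^{\rm app})=f\partial_x^4f+\partial_xf\partial_x^3f+f\partial_x^4\zeta^{\rm app}+\zeta^{\rm app}\partial_x^4f+\partial_xf\partial_x^3\zeta^{\rm app}+\partial_x\zeta^{\rm app}\partial_x^3f,$$ $$N_2(f,\zeta^{\rm app})=f\partial_x^2f+(\partial_xf)^2+f\partial_x^2\zeta^{\rm app}+2\partial_xf\partial_x\zeta^{\rm app}+\zeta^{\rm app}\partial_x^2f.$$ Then $$\tfrac{\varepsilon}{\mathrm{Bo}}|N_1(f,\zeta^{\rm app})|_{0,\nu t}+\varepsilon|N_2(f,\zeta^{\rm app})|_{0,\nu t}\leq 2\varepsilon\left(\tfrac{1}{\mathrm{Bo}}+1\right)\left(|\zeta^{\rm app}|_{0,\nu t}|f|_{4,\nu t}+\left(2|\zeta^{\rm app}|_{4,\nu t}+|\zeta^{\rm MU}|_{4,\nu t}\right)|f|_{0,\nu t}\right).$$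
   Context: $\mathbb{T}=\mathbb{R}/2\pi\mathbb{Z}$. For $g\in L^1(\mathbb{T})$, $\widehat g(n)=\frac1{2\pi}\int_{\mathbb{T}}ge^{-inx}dx$; for $s,\lambda\geq0$, $|g|_{s,\lambda}=\sum_{n\in\mathbb{Z}}(1+|n|)^se^{\lambda|n|}|\widehat g(n)|$ and $\mathbb{A}^s_\lambda$ is the space of $g$ with finite norm. *)

theory Defs
  imports "HOL-Analysis.Analysis"
begin

text \<open>Functions on the torus T = R/2piZ are modelled as 2pi-periodic functions
  real => complex.  L^1(T): periodic and absolutely integrable on [0,2pi].\<close>

definition in_L1T :: "(real \<Rightarrow> complex) \<Rightarrow> bool" where
  "in_L1T g \<longleftrightarrow> (\<forall>x. g (x + 2 * pi) = g x) \<and> g absolutely_integrable_on {0..2 * pi}"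

definition fcoeff :: "(real \<Rightarrow> complex) \<Rightarrow> int \<Rightarrow> complex" where
  "fcoeff g n = complex_of_real (1 / (2 * pi)) *
      integral {0..2 * pi} (\<lambda>x. g x * exp (- \<i> * of_int n * of_real x))"

definition wght :: "real \<Rightarrow> real \<Rightarrow> int \<Rightarrow> real" where
  "wght s lam n = (1 + real_of_int \<bar>n\<bar>) powr s * exp (lam * real_of_int \<bar>n\<bar>)"

definition anorm :: "real \<Rightarrow> real \<Rightarrow> (real \<Rightarrow> complex) \<Rightarrow> real" where
  "anorm s lam g = (\<Sum>\<^sub>\<infinity>n\<in>(UNIV::int set). wght s lam n * norm (fcoeff g n))"

definition in_A :: "real \<Rightarrow> real \<Rightarrow> (real \<Rightarrow> complex) \<Rightarrow> bool" where
  "in_A s lam g \<longleftrightarrow> in_L1T g \<and>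
     (\<lambda>n. wght s lam n * norm (fcoeff g n)) summable_on (UNIV::int set)"

text \<open>k-th derivative of g in A^k, given by its (absolutely convergent) Fourier
  series: the function with Fourier coefficients (i n)^k hat g(n).\<close>
definition dx :: "nat \<Rightarrow> (real \<Rightarrow> complex) \<Rightarrow> real \<Rightarrow> complex" where
  "dx k g x = (\<Sum>\<^sub>\<infinity>n\<in>(UNIV::int set).
      (\<i> * of_int n) ^ k * fcoeff g n * exp (\<i> * of_int n * of_real x))"

definition N1 :: "(real \<Rightarrow> complex) \<Rightarrow> (real \<Rightarrow> complex) \<Rightarrow> real \<Rightarrow> complex" where
  "N1 f z x = f x * dx 4 f x + dx 1 f x * dx 3 f x + f x * dx 4 z x + z x * dx 4 f x
      + dx 1 f x * dx 3 z x + dx 1 z x * dx 3 f x"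

definition N2 :: "(real \<Rightarrow> complex) \<Rightarrow> (real \<Rightarrow> complex) \<Rightarrow> real \<Rightarrow> complex" where
  "N2 f z x = f x * dx 2 f x + (dx 1 f x)^2 + f x * dx 2 z x + 2 * dx 1 f x * dx 1 z x
      + z x * dx 2 f x"

end

theory Submission
  imports Defs
begin

definition H :: "(int \<Rightarrow> complex) \<Rightarrow> real \<Rightarrow> complex" where
  "H c x = (\<Sum>\<^sub>\<infinity>m\<in>(UNIV::int set). c m * exp (\<i> * of_int m * of_real x))"

lemma filterlim_symm_int:
  "filterlim (\<lambda>N::nat. {-int N..int N}) (finite_subsets_at_top (UNIV::int set)) sequentially"
  unfolding filterlim_finite_subsets_at_top
proof (safe, goal_cases)
  case (1 X)
  define M where "M = Max (abs ` X \<union> {0})"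
  have M: "\<bar>x\<bar> \<le> M" if "x \<in> X" for x
    unfolding M_def using 1 that by (intro Max_ge) auto
  show ?case
  proof (rule eventually_sequentiallyI[of "nat M"])
    fix y assume "nat M \<le> y"
    then have "M \<le> int y" by linarith
    have "X \<subseteq> {- int y..int y}"
    proof
      fix x assume "x \<in> X"
      then have "\<bar>x\<bar> \<le> int y" using M \<open>M \<le> int y\<close> by (meson order_trans)
      then show "x \<in> {- int y..int y}" by (simp add: abs_le_iff)
    qed
    then show "finite {- int y..int y} \<and> X \<subseteq> {- int y..int y} \<and> {- int y..int y} \<subseteq> UNIV" by simp
  qed
qed

lemma symm_tendsto:
  fixes f :: "int \<Rightarrow> 'a::{comm_monoid_add,t2_space}"
  assumes "f summable_on UNIV"
  shows "(\<lambda>N::nat. sum f {-int N..int N}) \<longlonglongrightarrow> infsum f UNIV"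
  using filterlim_compose[OF infsum_tendsto[OF assms] filterlim_symm_int] by simp

lemma norm_exp_ii [simp]: "norm (exp (\<i> * of_int m * of_real x)) = 1"
  proof -
  have "\<i> * of_int m * of_real x = \<i> * of_real (of_int m * x)" by simp
  then show ?thesis by (simp only: norm_exp_i_times)
qed

lemma exp_ii_periodic: "exp (\<i> * of_int m * of_real (x + 2 * pi)) = exp (\<i> * of_int m * of_real x)"
proof -
  have "exp (\<i> * of_int m * of_real (x + 2 * pi)) = exp (\<i> * of_int m * of_real x) * exp ((2 * of_int m * pi) * \<i>)"
    by (simp add: algebra_simps flip: exp_add)
  also have "exp ((2 * of_int m * pi) * \<i>) = 1"
    using exp_integer_2pi[of "of_int m"] by simp
  finally show ?thesis by simp
qed

lemma wght0: "wght 0 lam n = exp (lam * real_of_int \<bar>n\<bar>)"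
  unfolding wght_def by (simp add: powr_def) 

lemma wght4: "wght 4 lam n = (1 + real_of_int \<bar>n\<bar>) ^ 4 * exp (lam * real_of_int \<bar>n\<bar>)"
  unfolding wght_def by (simp add: powr_realpow)

lemma AI_mult_cont:
  fixes u v :: "real \<Rightarrow> complex"
  assumes "u absolutely_integrable_on {a..b}" "continuous_on {a..b} v"
  shows "(\<lambda>x. u x * v x) absolutely_integrable_on {a..b}"
proof -
  have m: "v \<in> borel_measurable (lebesgue_on {a..b})"
    using assms(2) by (intro continuous_imp_measurable_on_sets_lebesgue) auto
  have bd: "bounded (v ` {a..b})"
    using assms(2) by (intro compact_imp_bounded compact_continuous_image) auto
  have "(\<lambda>x. v x * u x) absolutely_integrable_on {a..b}"
    using absolutely_integrable_bounded_measurable_product[OF bilinear_times m _ bd assms(1)] by simp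
  then show ?thesis by (simp add: mult.commute)
qed

lemma L1T_int_exp:
  assumes "in_L1T u"
  shows "(\<lambda>x. u x * exp (c * of_real x)) absolutely_integrable_on {0..2*pi}"
  using assms unfolding in_L1T_def
  by (intro AI_mult_cont) (auto intro!: continuous_intros)

lemma fcoeff_bound:
  assumes "in_L1T u"
  shows "norm (fcoeff u n) \<le> 1 / (2 * pi) * integral {0..2*pi} (\<lambda>x. norm (u x))"
proof -
  have ui: "u absolutely_integrable_on {0..2*pi}" using assms in_L1T_def by blast
  have i1: "(\<lambda>x. u x * exp (- \<i> * of_int n * of_real x)) integrable_on {0..2*pi}"
    using L1T_int_exp[OF assms, of "- \<i> * of_int n"] set_lebesgue_integral_eq_integral(1) 
    by (simp add: absolutely_integrable_on_def)
  have i2: "(\<lambda>x. norm (u x)) integrable_on {0..2*pi}" using ui absolutely_integrable_on_def by blast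
  have "norm (integral {0..2*pi} (\<lambda>x. u x * exp (- \<i> * of_int n * of_real x))) \<le> integral {0..2*pi} (\<lambda>x. norm (u x))"
  proof (rule integral_norm_bound_integral[OF i1 i2])
    fix x
    have "- \<i> * of_int n * of_real x = \<i> * of_int (-n) * of_real x" by simp
    then have "norm (exp (- \<i> * of_int n * of_real x)) = 1" by (metis norm_exp_ii)
    then show "norm (u x * exp (- \<i> * of_int n * of_real x)) \<le> norm (u x)" by (simp add: norm_mult)
  qed
  then show ?thesis unfolding fcoeff_def by (simp add: norm_mult norm_divide divide_right_mono)
qed

lemma mult_series:
  fixes u :: "real \<Rightarrow> complex" and c :: "int \<Rightarrow> complex"
  assumes u: "in_L1T u" and c: "(\<lambda>m. norm (c m)) summable_on UNIV"
  shows "in_L1T (\<lambda>x. u x * H c x) \<and>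
         fcoeff (\<lambda>x. u x * H c x) n = (\<Sum>\<^sub>\<infinity>m\<in>UNIV. c m * fcoeff u (n - m))"
proof -
  define C where "C = (\<Sum>\<^sub>\<infinity>m\<in>UNIV. norm (c m))"
  have ui: "u absolutely_integrable_on {0..2*pi}" and up: "\<And>x. u (x + 2*pi) = u x"
    using u in_L1T_def by auto
  have nui: "(\<lambda>x. norm (u x)) integrable_on {0..2*pi}" using ui absolutely_integrable_on_def by blast
  define B where "B = 1 / (2 * pi) * integral {0..2*pi} (\<lambda>x. norm (u x))"
  have fb: "norm (fcoeff u k) \<le> B" for k unfolding B_def by (rule fcoeff_bound[OF u])
  have tabs: "(\<lambda>m. norm (c m * exp (\<i> * of_int m * of_real x))) summable_on UNIV" for x
    using c by (simp add: norm_mult)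
  have tsum: "(\<lambda>m. c m * exp (\<i> * of_int m * of_real x)) summable_on UNIV" for x
    using abs_summable_summable[OF tabs] .
  define S where "S N x = (\<Sum>m\<in>{-int N..int N}. c m * exp (\<i> * of_int m * of_real x))" for N :: nat and x
  have Slim: "(\<lambda>N. S N x) \<longlonglongrightarrow> H c x" for x
    unfolding S_def H_def using symm_tendsto[OF tsum] .
  have Sb: "norm (S N x) \<le> C" for N x
  proof -
    have "norm (S N x) \<le> (\<Sum>m\<in>{-int N..int N}. norm (c m * exp (\<i> * of_int m * of_real x)))"
      unfolding S_def by (rule norm_sum)
    also have "\<dots> = (\<Sum>m\<in>{-int N..int N}. norm (c m))" by (simp add: norm_mult)
    also have "\<dots> \<le> C" unfolding C_def by (rule finite_sum_le_infsum[OF c]) auto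
    finally show ?thesis .
  qed
  have Hb: "norm (H c x) \<le> C" for x
  proof -
    have "norm (H c x) \<le> (\<Sum>\<^sub>\<infinity>m\<in>UNIV. norm (c m * exp (\<i> * of_int m * of_real x)))"
      unfolding H_def by (rule norm_infsum_bound[OF tabs])
    also have "\<dots> = C" unfolding C_def by (simp add: norm_mult)
    finally show ?thesis .
  qed
  have Scont: "continuous_on {0..2*pi} (S N)" for N
    unfolding S_def by (intro continuous_intros)
  have main: "(\<lambda>x. u x * H c x * exp (- \<i> * of_int k * of_real x)) integrable_on {0..2*pi} \<and>
     integral {0..2*pi} (\<lambda>x. u x * H c x * exp (- \<i> * of_int k * of_real x))
       = of_real (2*pi) * (\<Sum>\<^sub>\<infinity>m\<in>UNIV. c m * fcoeff u (k - m))" for k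
  proof -
    define g where "g N x = u x * S N x * exp (- \<i> * of_int k * of_real x)" for N x
    have gi: "g N integrable_on {0..2*pi}" for N
    proof -
      have "(\<lambda>x. u x * (S N x * exp (- \<i> * of_int k * of_real x))) absolutely_integrable_on {0..2*pi}"
        by (intro AI_mult_cont ui continuous_intros Scont)
      then show ?thesis unfolding g_def by (simp add: absolutely_integrable_on_def mult.assoc)
    qed
    have hi: "(\<lambda>x. norm (u x) * C) integrable_on {0..2*pi}"
      using integrable_on_mult_left[OF nui] .
    have gb: "norm (g N x) \<le> norm (u x) * C" for N x
    proof -
      have e: "norm (exp (- \<i> * of_int k * of_real x)) = 1"
        by (metis norm_exp_ii mult_minus_left mult_minus_right of_int_minus)
      show ?thesis unfolding g_def using Sb[of N x] 
        by (simp add: norm_mult e mult_left_mono)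
    qed
    have gl: "(\<lambda>N. g N x) \<longlonglongrightarrow> u x * H c x * exp (- \<i> * of_int k * of_real x)" for x
      unfolding g_def by (intro tendsto_intros Slim)
    note dc = dominated_convergence[OF gi hi gb gl]
    have ge: "integral {0..2*pi} (g N) = of_real (2*pi) * (\<Sum>m\<in>{-int N..int N}. c m * fcoeff u (k - m))" for N
    proof -
      have eq: "g N x = (\<Sum>m\<in>{-int N..int N}. c m * (u x * exp (- \<i> * of_int (k - m) * of_real x)))" for x
      proof -
        have "exp (\<i> * of_int m * of_real x) * exp (- \<i> * of_int k * of_real x) = exp (- \<i> * of_int (k - m) * of_real x)" for m
          by (simp add: algebra_simps flip: exp_add)
        then show ?thesis unfolding g_def S_def
          by (simp add: sum_distrib_left sum_distrib_right mult.assoc mult.left_commute)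
      qed
      have ii: "(\<lambda>x. u x * exp (- \<i> * of_int (k - m) * of_real x)) integrable_on {0..2*pi}" for m
        using L1T_int_exp[OF u, of "- \<i> * of_int (k - m)"] absolutely_integrable_on_def by blast
      have fc: "integral {0..2*pi} (\<lambda>x. u x * exp (- \<i> * of_int (k - m) * of_real x)) = of_real (2*pi) * fcoeff u (k - m)" for m
        unfolding fcoeff_def by simp
      have "integral {0..2*pi} (g N) = (\<Sum>m\<in>{-int N..int N}. integral {0..2*pi} (\<lambda>x. c m * (u x * exp (- \<i> * of_int (k - m) * of_real x))))"
        unfolding eq by (rule integral_sum) (use ii in \<open>auto intro!: integrable_on_mult_right simp del: of_int_diff\<close>)
      also have "\<dots> = (\<Sum>m\<in>{-int N..int N}. c m * (of_real (2*pi) * fcoeff u (k - m)))"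
        by (rule sum.cong[OF refl]) (simp only: integral_mult_right fc)
      also have "\<dots> = of_real (2*pi) * (\<Sum>m\<in>{-int N..int N}. c m * fcoeff u (k - m))"
        by (simp add: sum_distrib_left mult.left_commute)
      finally show ?thesis .
    qed
    have cs: "(\<lambda>m. c m * fcoeff u (k - m)) summable_on UNIV"
    proof (rule abs_summable_summable)
      have "(\<lambda>m. norm (c m) * B) summable_on UNIV" using summable_on_cmult_left[OF c] .
      then show "(\<lambda>m. norm (c m * fcoeff u (k - m))) summable_on UNIV"
        by (rule summable_on_comparison_test) (auto simp: norm_mult intro: mult_left_mono fb)
    qed
    have "(\<lambda>N. integral {0..2*pi} (g N)) \<longlonglongrightarrow> of_real (2*pi) * (\<Sum>\<^sub>\<infinity>m\<in>UNIV. c m * fcoeff u (k - m))"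
      unfolding ge by (intro tendsto_intros symm_tendsto[OF cs])
    with dc(2) have "integral {0..2*pi} (\<lambda>x. u x * H c x * exp (- \<i> * of_int k * of_real x))
       = of_real (2*pi) * (\<Sum>\<^sub>\<infinity>m\<in>UNIV. c m * fcoeff u (k - m))"
      using LIMSEQ_unique by blast
    with dc(1) show ?thesis by simp
  qed
  have int0: "(\<lambda>x. u x * H c x) integrable_on {0..2*pi}" using conjunct1[OF main[of 0]] by simp
  have ai: "(\<lambda>x. u x * H c x) absolutely_integrable_on {0..2*pi}"
    by (rule absolutely_integrable_integrable_bound[OF _ int0 integrable_on_mult_left[OF nui, of C]])
       (use Hb in \<open>auto simp: norm_mult intro: mult_left_mono\<close>)
  have Hp: "H c (x + 2*pi) = H c x" for x unfolding H_def exp_ii_periodic ..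
  have "in_L1T (\<lambda>x. u x * H c x)" unfolding in_L1T_def using ai up Hp by simp
  moreover have "fcoeff (\<lambda>x. u x * H c x) n = (\<Sum>\<^sub>\<infinity>m\<in>UNIV. c m * fcoeff u (n - m))"
  proof -
    have "fcoeff (\<lambda>x. u x * H c x) n = complex_of_real (1/(2*pi)) * integral {0..2*pi} (\<lambda>x. u x * H c x * exp (- \<i> * of_int n * of_real x))"
      by (simp only: fcoeff_def)
    also have "\<dots> = (\<Sum>\<^sub>\<infinity>m\<in>UNIV. c m * fcoeff u (n - m))"
      by (simp only: conjunct2[OF main[of n]]) simp
    finally show ?thesis .
  qed
  ultimately show ?thesis by blast
qed

lemma integral_exp_c:
  assumes  "T \<ge> 0" "a\<noteq>0"
  shows "integral {0..T} (\<lambda>t. exp(a * complex_of_real t)) = (exp(a * of_real T) - 1) / a"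
proof -
  have "\<And>t. t \<in> {0..T} \<Longrightarrow> ((\<lambda>x. exp (a * x) / a) has_vector_derivative exp (a * t)) (at t within {0..T})"
    using assms
    by (intro derivative_eq_intros has_complex_derivative_imp_has_vector_derivative [unfolded o_def] | simp)+
  then have "((\<lambda>t. exp(a * of_real t)) has_integral exp(a * complex_of_real T)/a - exp(a * of_real 0)/a)  {0..T}"
    by (meson fundamental_theorem_of_calculus \<open>T \<ge> 0\<close>)
  then show ?thesis
    by (simp add: diff_divide_distrib integral_unique)
qed

lemma L1T_one: "in_L1T (\<lambda>x. 1)"
  unfolding in_L1T_def by (auto intro!: absolutely_integrable_continuous_real continuous_intros)

lemma fcoeff_one: "fcoeff (\<lambda>x. 1) k = (if k = 0 then 1 else 0)"
proof (cases "k = 0")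
  case True then show ?thesis unfolding fcoeff_def by (simp add: scaleR_conv_of_real)
next
  case False
  have "integral {0..2*pi} (\<lambda>x. exp ((- \<i> * of_int k) * of_real x)) = (exp ((- \<i> * of_int k) * of_real (2*pi)) - 1) / (- \<i> * of_int k)"
    using False by (intro integral_exp_c) auto
  also have "exp ((- \<i> * of_int k) * of_real (2*pi)) = 1"
    using exp_integer_2pi[of "of_int (-k)"] by (simp add: algebra_simps)
  finally show ?thesis using False unfolding fcoeff_def by (simp add: mult.assoc)
qed

definition cdx :: "nat \<Rightarrow> (real \<Rightarrow> complex) \<Rightarrow> int \<Rightarrow> complex" where
  "cdx k g m = (\<i> * of_int m) ^ k * fcoeff g m"

lemma dx_H: "dx k g = H (cdx k g)"
  unfolding dx_def H_def cdx_def by (rule ext) simp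

lemma pow_le_wght:
  assumes "k \<le> 4" "0 \<le> lam"
  shows "\<bar>real_of_int m\<bar> ^ k \<le> wght 4 lam m"
proof -
  have "\<bar>real_of_int m\<bar> ^ k \<le> (1 + real_of_int \<bar>m\<bar>) ^ k" by (intro power_mono) auto
  also have "\<dots> \<le> (1 + real_of_int \<bar>m\<bar>) ^ 4" using assms by (intro power_increasing) auto
  also have "\<dots> \<le> (1 + real_of_int \<bar>m\<bar>) ^ 4 * exp (lam * real_of_int \<bar>m\<bar>)"
    using assms by (intro mult_le_cancel_left1[THEN iffD2] impI) (auto simp: one_le_exp_iff)
  finally show ?thesis unfolding wght4 .
qed

lemma cdx_summable:
  assumes "in_A 4 lam g" "k \<le> 4" "0 \<le> lam"
  shows "(\<lambda>m. norm (cdx k g m)) summable_on UNIV"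
proof -
  have s: "(\<lambda>n. wght 4 lam n * norm (fcoeff g n)) summable_on UNIV" using assms in_A_def by blast
  show ?thesis
    by (rule summable_on_comparison_test[OF s])
       (auto simp: cdx_def norm_mult norm_power intro!: mult_right_mono pow_le_wght assms)
qed

lemma dx_props:
  assumes "in_A 4 lam g" "k \<le> 4" "0 \<le> lam"
  shows "in_L1T (dx k g)" "fcoeff (dx k g) n = cdx k g n"
proof -
  note r = mult_series[OF L1T_one cdx_summable[OF assms], of n]
  show "in_L1T (dx k g)" using r by (simp add: dx_H)
  have "fcoeff (dx k g) n = (\<Sum>\<^sub>\<infinity>m\<in>UNIV. cdx k g m * fcoeff (\<lambda>x. 1) (n - m))"
    using r by (simp add: dx_H)
  also have "\<dots> = (\<Sum>\<^sub>\<infinity>m\<in>{n}. cdx k g m * fcoeff (\<lambda>x. 1) (n - m))"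
    by (rule infsum_cong_neutral) (auto simp: fcoeff_one)
  also have "\<dots> = cdx k g n" by (simp add: fcoeff_one)
  finally show "fcoeff (dx k g) n = cdx k g n" .
qed

lemma L1T_add: "in_L1T g \<Longrightarrow> in_L1T h \<Longrightarrow> in_L1T (\<lambda>x. g x + h x)"
  unfolding in_L1T_def by (auto intro: set_integral_add(1))

lemma fcoeff_add:
  assumes "in_L1T g" "in_L1T h"
  shows "fcoeff (\<lambda>x. g x + h x) n = fcoeff g n + fcoeff h n"
proof -
  have i: "(\<lambda>x. g x * exp (- \<i> * of_int n * of_real x)) integrable_on {0..2*pi}"
          "(\<lambda>x. h x * exp (- \<i> * of_int n * of_real x)) integrable_on {0..2*pi}"
    using L1T_int_exp[OF assms(1)] L1T_int_exp[OF assms(2)] absolutely_integrable_on_def by blast+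
  have "integral {0..2*pi} (\<lambda>x. (g x + h x) * exp (- \<i> * of_int n * of_real x)) = integral {0..2*pi} (\<lambda>x. g x * exp (- \<i> * of_int n * of_real x)) + integral {0..2*pi} (\<lambda>x. h x * exp (- \<i> * of_int n * of_real x))"
    by (simp only: distrib_right integral_add[OF i])
  then show ?thesis unfolding fcoeff_def by (simp add: distrib_left)
qed

lemma L1T_cmult: "in_L1T g \<Longrightarrow> in_L1T (\<lambda>x. a * g x)"
proof -
  assume g: "in_L1T g"
  have "(\<lambda>x. g x * a) absolutely_integrable_on {0..2*pi}"
    using g unfolding in_L1T_def by (intro AI_mult_cont) auto
  then show ?thesis using g unfolding in_L1T_def by (simp add: mult.commute)
qed

lemma fcoeff_cmult: "fcoeff (\<lambda>x. a * g x) n = a * fcoeff g n"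
  unfolding fcoeff_def by (simp add: mult.assoc)

lemma prod_has_sum:
  fixes X Y :: "int \<Rightarrow> real"
  assumes X: "X summable_on UNIV" and Y: "Y summable_on UNIV"
    and X0: "\<And>p. X p \<ge> 0" and Y0: "\<And>q. Y q \<ge> 0"
  shows "((\<lambda>(p,q). X p * Y q) has_sum (infsum X UNIV * infsum Y UNIV)) UNIV"
proof -
  have r: "((\<lambda>q. (\<lambda>(p,q). X p * Y q) (p, q)) has_sum X p * infsum Y UNIV) UNIV" for p
    using has_sum_cmult_right[OF has_sum_infsum[OF Y], of "X p"] by simp
  have g: "((\<lambda>p. X p * infsum Y UNIV) has_sum infsum X UNIV * infsum Y UNIV) UNIV"
    using has_sum_cmult_left[OF has_sum_infsum[OF X]] .
  have s: "(\<lambda>(p,q). X p * Y q) summable_on Sigma UNIV (\<lambda>_. UNIV)"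
    by (rule summable_on_SigmaI[OF r has_sum_imp_summable[OF g]]) (simp add: X0 Y0)
  have "((\<lambda>(p,q). X p * Y q) has_sum (infsum X UNIV * infsum Y UNIV)) (Sigma UNIV (\<lambda>_. UNIV))"
    by (rule has_sum_SigmaI[OF r g s])
  then show ?thesis by simp
qed

lemma wght0_ge1: "0 \<le> lam \<Longrightarrow> 1 \<le> wght 0 lam n"
  unfolding wght0 by (simp add: one_le_exp_iff)

lemma wght0_le4: "0 \<le> lam \<Longrightarrow> wght 0 lam n \<le> wght 4 lam n"
  unfolding wght0 wght4 by (simp add: one_le_power)

lemma wght4_eq: "wght 4 lam n = (1 + real_of_int \<bar>n\<bar>) ^ 4 * wght 0 lam n"
  unfolding wght0 wght4 ..

lemma wght0_sub: "0 \<le> lam \<Longrightarrow> wght 0 lam n \<le> wght 0 lam (n - q) * wght 0 lam q"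
  unfolding wght0 
proof -
  assume "0 \<le> lam"
  have "real_of_int \<bar>n\<bar> \<le> real_of_int \<bar>n - q\<bar> + real_of_int \<bar>q\<bar>" by linarith
  then have "lam * real_of_int \<bar>n\<bar> \<le> lam * real_of_int \<bar>n - q\<bar> + lam * real_of_int \<bar>q\<bar>"
    using \<open>0 \<le> lam\<close> by (metis distrib_left mult_left_mono)
  then show "exp (lam * real_of_int \<bar>n\<bar>) \<le> exp (lam * real_of_int \<bar>n - q\<bar>) * exp (lam * real_of_int \<bar>q\<bar>)"
    by (simp flip: exp_add)
qed

lemma A0_summable:
  assumes "in_A 4 lam g" "0 \<le> lam"
  shows "(\<lambda>n. wght 0 lam n * norm (fcoeff g n)) summable_on UNIV"
proof -
  have s: "(\<lambda>n. wght 4 lam n * norm (fcoeff g n)) summable_on UNIV" using assms in_A_def by blast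
  show ?thesis by (rule summable_on_comparison_test[OF s]) (use wght0_le4[OF assms(2)] in \<open>auto intro!: mult_right_mono simp: wght0\<close>)
qed

lemma A4_summable:
  assumes "in_A 4 lam g"
  shows "(\<lambda>n. wght 4 lam n * norm (fcoeff g n)) summable_on UNIV"
  using assms in_A_def by blast

lemma conv_bound:
  fixes fA fG :: "real \<Rightarrow> complex"
  assumes A: "in_A 4 lam fA" and G: "in_A 4 lam fG" and lam: "0 \<le> lam"
    and ab: "0 \<le> \<alpha>" "0 \<le> \<beta>"
    and yb: "\<And>p q::int. \<bar>real_of_int p\<bar> ^ j * \<bar>real_of_int q\<bar> ^ k \<le> \<alpha> * (1 + real_of_int \<bar>p\<bar>) ^ 4 + \<beta> * (1 + real_of_int \<bar>q\<bar>) ^ 4"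
  defines "b \<equiv> (\<lambda>n. \<Sum>\<^sub>\<infinity>q\<in>UNIV. cdx k fG q * cdx j fA (n - q))"
  shows "(\<lambda>n. wght 0 lam n * norm (b n)) summable_on UNIV \<and>
    (\<Sum>\<^sub>\<infinity>n\<in>UNIV. wght 0 lam n * norm (b n)) \<le>
      \<alpha> * anorm 4 lam fA * anorm 0 lam fG + \<beta> * anorm 0 lam fA * anorm 4 lam fG"
proof -
  define A0 where "A0 p = wght 0 lam p * norm (fcoeff fA p)" for p
  define A4 where "A4 p = wght 4 lam p * norm (fcoeff fA p)" for p
  define G0 where "G0 p = wght 0 lam p * norm (fcoeff fG p)" for p
  define G4 where "G4 p = wght 4 lam p * norm (fcoeff fG p)" for p
  have sA0: "A0 summable_on UNIV" unfolding A0_def using A0_summable[OF A lam] .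
  have sG0: "G0 summable_on UNIV" unfolding G0_def using A0_summable[OF G lam] .
  have sA4: "A4 summable_on UNIV" unfolding A4_def using A4_summable[OF A] .
  have sG4: "G4 summable_on UNIV" unfolding G4_def using A4_summable[OF G] .
  have nn: "A0 p \<ge> 0" "A4 p \<ge> 0" "G0 p \<ge> 0" "G4 p \<ge> 0" for p
    unfolding A0_def A4_def G0_def G4_def wght0 wght4 by auto
  define W where "W = (\<lambda>(p,q). \<alpha> * (A4 p * G0 q) + \<beta> * (A0 p * G4 q))"
  define T where "T = \<alpha> * anorm 4 lam fA * anorm 0 lam fG + \<beta> * anorm 0 lam fA * anorm 4 lam fG"
  have Wsum: "(W has_sum T) UNIV"
  proof -
    have We: "W = (\<lambda>x. \<alpha> * (\<lambda>(p,q). A4 p * G0 q) x + \<beta> * (\<lambda>(p,q). A0 p * G4 q) x)"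
      unfolding W_def by (rule ext) (simp add: case_prod_unfold)
    have "(W has_sum (\<alpha> * (infsum A4 UNIV * infsum G0 UNIV) + \<beta> * (infsum A0 UNIV * infsum G4 UNIV))) UNIV"
      unfolding We
      by (rule has_sum_add[OF has_sum_cmult_right[OF prod_has_sum[OF sA4 sG0 nn(2) nn(3)]]
                               has_sum_cmult_right[OF prod_has_sum[OF sA0 sG4 nn(1) nn(4)]]])
    moreover have "\<alpha> * (infsum A4 UNIV * infsum G0 UNIV) + \<beta> * (infsum A0 UNIV * infsum G4 UNIV) = T"
      unfolding T_def anorm_def A0_def A4_def G0_def G4_def by (simp add: mult.assoc)
    ultimately show ?thesis by simp
  qed
  define V where "V = (\<lambda>(n,q). W (n - q, q))"
  have Vsum: "(V has_sum T) UNIV"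
    unfolding V_def
    by (rule has_sum_reindex_bij_witness[where i = "\<lambda>(p,q). (p + q, q)" and j = "\<lambda>(n,q). (n - q, q)", THEN iffD2, OF _ _ _ _ _ refl Wsum])
       (auto simp: case_prod_unfold)
  define K where "K = (\<lambda>(n,q). wght 0 lam n * (norm (cdx k fG q) * norm (cdx j fA (n - q))))"
  have K0: "K x \<ge> 0" for x unfolding K_def wght0 by (auto simp: case_prod_unfold)
  have KV: "K x \<le> V x" for x
  proof -
    obtain n q where x: "x = (n, q)" by (cases x)
    define p where "p = n - q"
    have "K x = wght 0 lam n * ((\<bar>real_of_int p\<bar> ^ j * \<bar>real_of_int q\<bar> ^ k) * (norm (fcoeff fA p) * norm (fcoeff fG q)))"
    proof -
      have nc: "norm (cdx j fA (n - q)) = \<bar>real_of_int p\<bar> ^ j * norm (fcoeff fA p)"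
        unfolding cdx_def p_def by (simp add: norm_mult norm_power del: of_int_diff)
      have ng: "norm (cdx k fG q) = \<bar>real_of_int q\<bar> ^ k * norm (fcoeff fG q)"
        unfolding cdx_def by (simp add: norm_mult norm_power)
      show ?thesis unfolding K_def x by (simp add: nc ng mult_ac)
    qed
    also have "\<dots> \<le> (wght 0 lam p * wght 0 lam q) * ((\<alpha> * (1 + real_of_int \<bar>p\<bar>) ^ 4 + \<beta> * (1 + real_of_int \<bar>q\<bar>) ^ 4) * (norm (fcoeff fA p) * norm (fcoeff fG q)))"
      unfolding p_def
      by (intro mult_mono wght0_sub lam yb mult_right_mono) (auto simp: wght0)
    also have "\<dots> = V x"
      unfolding V_def W_def x p_def A0_def A4_def G0_def G4_def wght4_eq by (simp add: algebra_simps)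
    finally show ?thesis .
  qed
  have Ksum: "K summable_on UNIV"
    by (rule summable_on_comparison_test[OF has_sum_imp_summable[OF Vsum] KV K0])
  have KleT: "infsum K UNIV \<le> T"
    using infsum_mono[OF Ksum has_sum_imp_summable[OF Vsum] KV] Vsum infsumI by fastforce
  define Kc where "Kc n q = K (n, q)" for n q
  have Ks': "(\<lambda>(n,q). Kc n q) summable_on Sigma UNIV (\<lambda>_. UNIV)"
    using Ksum unfolding Kc_def by simp
  have R: "(\<lambda>n. infsum (Kc n) UNIV) summable_on UNIV"
    using summable_on_Sigma_banach[OF Ks'] by simp
  have RK: "infsum (\<lambda>n. infsum (Kc n) UNIV) UNIV = infsum K UNIV"
    using infsum_Sigma'_banach[OF Ks'] unfolding Kc_def by simp
  have rowsum: "Kc n summable_on UNIV" for n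
    using summable_on_SigmaD1[OF Ks', of n] by simp
  have bn: "wght 0 lam n * norm (b n) \<le> infsum (Kc n) UNIV" for n
  proof -
    have w1: "a \<le> wght 0 lam n * a" if "0 \<le> a" for a :: real
      using wght0_ge1[OF lam, of n] that by (metis mult_1 mult_right_mono)
    have ns: "(\<lambda>q. norm (cdx k fG q * cdx j fA (n - q))) summable_on UNIV"
      by (rule summable_on_comparison_test[OF rowsum[of n]])
         (auto simp: Kc_def K_def norm_mult intro!: w1)
    have "norm (b n) \<le> (\<Sum>\<^sub>\<infinity>q\<in>UNIV. norm (cdx k fG q * cdx j fA (n - q)))"
      unfolding b_def by (rule norm_infsum_bound[OF ns])
    then have "wght 0 lam n * norm (b n) \<le> wght 0 lam n * (\<Sum>\<^sub>\<infinity>q\<in>UNIV. norm (cdx k fG q * cdx j fA (n - q)))"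
      by (rule mult_left_mono) (simp add: wght0)
    also have "\<dots> = infsum (Kc n) UNIV"
      unfolding Kc_def K_def by (simp add: infsum_cmult_right' norm_mult)
    finally show ?thesis .
  qed
  have bs: "(\<lambda>n. wght 0 lam n * norm (b n)) summable_on UNIV"
    by (rule summable_on_comparison_test[OF R bn]) (simp add: wght0)
  have "(\<Sum>\<^sub>\<infinity>n\<in>UNIV. wght 0 lam n * norm (b n)) \<le> infsum (\<lambda>n. infsum (Kc n) UNIV) UNIV"
    by (rule infsum_mono[OF bs R bn])
  also have "\<dots> \<le> T" using RK KleT by simp
  finally show ?thesis using bs unfolding T_def by blast
qed

definition WB :: "real \<Rightarrow> (int \<Rightarrow> complex) \<Rightarrow> real \<Rightarrow> bool" where
  "WB lam b B \<longleftrightarrow> (\<lambda>n. wght 0 lam n * norm (b n)) summable_on UNIV \<and>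
     (\<Sum>\<^sub>\<infinity>n\<in>UNIV. wght 0 lam n * norm (b n)) \<le> B"

lemma wght0_nonneg: "0 \<le> wght 0 lam n" unfolding wght0 by simp

lemma WB_add:
  assumes "WB lam b1 B1" "WB lam b2 B2"
  shows "WB lam (\<lambda>n. b1 n + b2 n) (B1 + B2)"
proof -
  have s1: "(\<lambda>n. wght 0 lam n * norm (b1 n)) summable_on UNIV" and s2: "(\<lambda>n. wght 0 lam n * norm (b2 n)) summable_on UNIV"
    using assms WB_def by auto
  have s: "(\<lambda>n. wght 0 lam n * norm (b1 n) + wght 0 lam n * norm (b2 n)) summable_on UNIV"
    using summable_on_add[OF s1 s2] .
  have le: "wght 0 lam n * norm (b1 n + b2 n) \<le> wght 0 lam n * norm (b1 n) + wght 0 lam n * norm (b2 n)" for n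
    using mult_left_mono[OF norm_triangle_ineq wght0_nonneg] by (simp add: distrib_left)
  have ss: "(\<lambda>n. wght 0 lam n * norm (b1 n + b2 n)) summable_on UNIV"
    by (rule summable_on_comparison_test[OF s le]) (simp add: wght0_nonneg)
  have "(\<Sum>\<^sub>\<infinity>n\<in>UNIV. wght 0 lam n * norm (b1 n + b2 n)) \<le> (\<Sum>\<^sub>\<infinity>n\<in>UNIV. wght 0 lam n * norm (b1 n) + wght 0 lam n * norm (b2 n))"
    by (rule infsum_mono[OF ss s le])
  also have "\<dots> = (\<Sum>\<^sub>\<infinity>n\<in>UNIV. wght 0 lam n * norm (b1 n)) + (\<Sum>\<^sub>\<infinity>n\<in>UNIV. wght 0 lam n * norm (b2 n))"
    by (rule infsum_add[OF s1 s2])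
  also have "\<dots> \<le> B1 + B2" using assms WB_def by (auto intro: add_mono)
  finally show ?thesis using ss WB_def by blast
qed

lemma WB_cmult2:
  assumes "WB lam b B"
  shows "WB lam (\<lambda>n. 2 * b n) (2 * B)"
proof -
  have s: "(\<lambda>n. wght 0 lam n * norm (b n)) summable_on UNIV" using assms WB_def by auto
  have e: "(\<lambda>n. wght 0 lam n * norm (2 * b n)) = (\<lambda>n. 2 * (wght 0 lam n * norm (b n)))"
    by (rule ext) (simp add: norm_mult)
  show ?thesis unfolding WB_def e
    using summable_on_cmult_right[OF s, of 2] infsum_cmult_right[OF s, of 2] assms WB_def by auto
qed

lemma WB_mono: "WB lam b B \<Longrightarrow> B \<le> B' \<Longrightarrow> WB lam b B'"
  unfolding WB_def by auto

lemma WB_fun_add: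
  assumes "in_L1T g1 \<and> WB lam (fcoeff g1) B1" "in_L1T g2 \<and> WB lam (fcoeff g2) B2"
  shows "in_L1T (\<lambda>x. g1 x + g2 x) \<and> WB lam (fcoeff (\<lambda>x. g1 x + g2 x)) (B1 + B2)"
proof -
  have "fcoeff (\<lambda>x. g1 x + g2 x) = (\<lambda>n. fcoeff g1 n + fcoeff g2 n)"
    using assms by (intro ext fcoeff_add) auto
  then show ?thesis using assms L1T_add WB_add by metis
qed

lemma WB_fun_cmult2:
  assumes "in_L1T g \<and> WB lam (fcoeff g) B"
  shows "in_L1T (\<lambda>x. 2 * g x) \<and> WB lam (fcoeff (\<lambda>x. 2 * g x)) (2 * B)"
proof -
  have "fcoeff (\<lambda>x. 2 * g x) = (\<lambda>n. 2 * fcoeff g n)"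
    by (intro ext fcoeff_cmult)
  then show ?thesis using assms L1T_cmult WB_cmult2 by metis
qed

lemma term_WB:
  fixes u fA fG :: "real \<Rightarrow> complex"
  assumes u: "in_L1T u" "\<And>p. fcoeff u p = cdx j fA p"
    and A: "in_A 4 lam fA" and G: "in_A 4 lam fG" and lam: "0 \<le> lam" and k: "k \<le> 4"
    and ab: "0 \<le> \<alpha>" "0 \<le> \<beta>"
    and yb: "\<And>p q::int. \<bar>real_of_int p\<bar> ^ j * \<bar>real_of_int q\<bar> ^ k \<le> \<alpha> * (1 + real_of_int \<bar>p\<bar>) ^ 4 + \<beta> * (1 + real_of_int \<bar>q\<bar>) ^ 4"
  shows "in_L1T (\<lambda>x. u x * dx k fG x) \<and>
    WB lam (fcoeff (\<lambda>x. u x * dx k fG x)) (\<alpha> * anorm 4 lam fA * anorm 0 lam fG + \<beta> * anorm 0 lam fA * anorm 4 lam fG)"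
proof -
  note ms = mult_series[OF u(1) cdx_summable[OF G k lam]]
  have e: "fcoeff (\<lambda>x. u x * dx k fG x) = (\<lambda>n. \<Sum>\<^sub>\<infinity>q\<in>UNIV. cdx k fG q * cdx j fA (n - q))"
    by (rule ext) (use ms in \<open>simp add: dx_H u(2)\<close>)
  have "in_L1T (\<lambda>x. u x * dx k fG x)" using ms by (simp add: dx_H)
  then show ?thesis unfolding e WB_def using conv_bound[OF A G lam ab yb] by blast
qed

lemma cdx0: "fcoeff f p = cdx 0 f p" unfolding cdx_def by simp

lemma young13:
  fixes x y :: real assumes "0 \<le> x" "0 \<le> y"
  shows "x ^ 1 * y ^ 3 \<le> 1/4 * (1 + x) ^ 4 + 3/4 * (1 + y) ^ 4"
proof -
  have id: "1/4 * x^4 + 3/4 * y^4 - x * y^3 = (x - y)^2 * (x^2 + 2*x*y + 3*y^2) / 4"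
    by (simp add: algebra_simps power2_eq_square power3_eq_cube power4_eq_xxxx)
  have "0 \<le> (x - y)^2 * (x^2 + 2*x*y + 3*y^2) / 4" using assms by simp
  then have "x * y^3 \<le> 1/4 * x^4 + 3/4 * y^4" using id by linarith
  moreover have "x^4 \<le> (1+x)^4" "y^4 \<le> (1+y)^4" using assms by (auto intro: power_mono)
  ultimately show ?thesis by simp
qed

lemma young11:
  fixes x y :: real assumes "0 \<le> x" "0 \<le> y"
  shows "x ^ 1 * y ^ 1 \<le> 1/2 * (1 + x) ^ 4 + 1/2 * (1 + y) ^ 4"
proof -
  have "0 \<le> (x - y)^2" by simp
  then have a: "x * y \<le> 1/2 * x^2 + 1/2 * y^2" unfolding power2_diff by simp
  have b: "x^2 \<le> (1+x)^4" if "0 \<le> x" for x :: real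
  proof -
    have "x^2 \<le> (1+x)^2" using that by (auto intro: power_mono)
    also have "\<dots> \<le> (1+x)^4" using that by (intro power_increasing) auto
    finally show ?thesis .
  qed
  show ?thesis using a b[OF assms(1)] b[OF assms(2)] by simp
qed

lemma young04:
  fixes x y :: real assumes "0 \<le> x" "0 \<le> y"
  shows "x ^ 0 * y ^ 4 \<le> 0 * (1 + x) ^ 4 + 1 * (1 + y) ^ 4"
  using assms by (auto intro: power_mono)

lemma young02:
  fixes x y :: real assumes "0 \<le> x" "0 \<le> y"
  shows "x ^ 0 * y ^ 2 \<le> 0 * (1 + x) ^ 4 + 1 * (1 + y) ^ 4"
proof -
  have "y^2 \<le> (1+y)^2" using assms by (auto intro: power_mono)
  also have "\<dots> \<le> (1+y)^4" using assms by (intro power_increasing) auto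
  finally show ?thesis by simp
qed

lemma anorm_nonneg: "0 \<le> anorm s lam g"
  unfolding anorm_def wght_def by (intro infsum_nonneg) auto

lemma norm_tri_bound:
  assumes A: "in_A 4 lam f" and Z: "in_A 4 lam z"
  shows "anorm 4 lam f \<le> anorm 4 lam (\<lambda>x. z x + f x) + anorm 4 lam z"
proof -
  have Lf: "in_L1T f" and Lz: "in_L1T z" using A Z in_A_def by auto
  have fe: "fcoeff (\<lambda>x. z x + f x) n = fcoeff z n + fcoeff f n" for n by (rule fcoeff_add[OF Lz Lf])
  have w: "0 \<le> wght 4 lam n" for n unfolding wght_def by simp
  have sf: "(\<lambda>n. wght 4 lam n * norm (fcoeff f n)) summable_on UNIV" using A in_A_def by auto
  have sz: "(\<lambda>n. wght 4 lam n * norm (fcoeff z n)) summable_on UNIV" using Z in_A_def by auto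
  have szf: "(\<lambda>n. wght 4 lam n * norm (fcoeff z n) + wght 4 lam n * norm (fcoeff f n)) summable_on UNIV"
    using summable_on_add[OF sz sf] .
  have sM: "(\<lambda>n. wght 4 lam n * norm (fcoeff (\<lambda>x. z x + f x) n)) summable_on UNIV"
    by (rule summable_on_comparison_test[OF szf])
       (auto simp: fe w distrib_left[symmetric] intro!: mult_left_mono norm_triangle_ineq)
  have sMz: "(\<lambda>n. wght 4 lam n * norm (fcoeff (\<lambda>x. z x + f x) n) + wght 4 lam n * norm (fcoeff z n)) summable_on UNIV"
    using summable_on_add[OF sM sz] .
  have le: "wght 4 lam n * norm (fcoeff f n) \<le> wght 4 lam n * norm (fcoeff (\<lambda>x. z x + f x) n) + wght 4 lam n * norm (fcoeff z n)" for n
  proof -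
    have "norm (fcoeff f n) \<le> norm (fcoeff (\<lambda>x. z x + f x) n) + norm (fcoeff z n)"
      unfolding fe using norm_triangle_ineq4[of "fcoeff z n + fcoeff f n" "fcoeff z n"] by simp
    then have "wght 4 lam n * norm (fcoeff f n) \<le> wght 4 lam n * (norm (fcoeff (\<lambda>x. z x + f x) n) + norm (fcoeff z n))"
      by (rule mult_left_mono[OF _ w])
    then show ?thesis by (simp add: distrib_left)
  qed
  have "anorm 4 lam f \<le> (\<Sum>\<^sub>\<infinity>n\<in>UNIV. wght 4 lam n * norm (fcoeff (\<lambda>x. z x + f x) n) + wght 4 lam n * norm (fcoeff z n))"
    unfolding anorm_def by (rule infsum_mono[OF sf sMz le])
  also have "\<dots> = anorm 4 lam (\<lambda>x. z x + f x) + anorm 4 lam z"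
    unfolding anorm_def by (rule infsum_add[OF sM sz])
  finally show ?thesis .
qed

theorem proposition6p2:
  fixes eps Bo nu t :: real and f zapp :: "real \<Rightarrow> complex"
  assumes "0 < eps" and "eps \<le> 1" and "0 < Bo" and "0 \<le> nu" and "0 \<le> t"
    and "in_A 4 (nu * t) f" and "in_A 4 (nu * t) zapp"
  defines "zMU \<equiv> (\<lambda>x. zapp x + f x)"
  shows "in_A 0 (nu * t) (N1 f zapp) \<and> in_A 0 (nu * t) (N2 f zapp) \<and>
    eps / Bo * anorm 0 (nu * t) (N1 f zapp) + eps * anorm 0 (nu * t) (N2 f zapp)
    \<le> 2 * eps * (1 / Bo + 1) *
       (anorm 0 (nu * t) zapp * anorm 4 (nu * t) f
        + (2 * anorm 4 (nu * t) zapp + anorm 4 (nu * t) zMU) * anorm 0 (nu * t) f)"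
proof -
  define lam where "lam = nu * t"
  have lam: "0 \<le> lam" unfolding lam_def using assms by simp
  have Af: "in_A 4 lam f" and Az: "in_A 4 lam zapp" using assms lam_def by auto
  have Lf: "in_L1T f" and Lz: "in_L1T zapp" using Af Az in_A_def by auto
  have d1f: "in_L1T (dx 1 f)" "\<And>p. fcoeff (dx 1 f) p = cdx 1 f p" using dx_props[OF Af _ lam] by auto
  have d1z: "in_L1T (dx 1 zapp)" "\<And>p. fcoeff (dx 1 zapp) p = cdx 1 zapp p" using dx_props[OF Az _ lam] by auto
  have y04: "\<bar>real_of_int p\<bar> ^ 0 * \<bar>real_of_int q\<bar> ^ 4 \<le> 0 * (1 + real_of_int \<bar>p\<bar>) ^ 4 + 1 * (1 + real_of_int \<bar>q\<bar>) ^ 4" for p q :: int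
    using young04[of "\<bar>real_of_int p\<bar>" "\<bar>real_of_int q\<bar>"] by simp
  have y02: "\<bar>real_of_int p\<bar> ^ 0 * \<bar>real_of_int q\<bar> ^ 2 \<le> 0 * (1 + real_of_int \<bar>p\<bar>) ^ 4 + 1 * (1 + real_of_int \<bar>q\<bar>) ^ 4" for p q :: int
    using young02[of "\<bar>real_of_int p\<bar>" "\<bar>real_of_int q\<bar>"] by simp
  have y13: "\<bar>real_of_int p\<bar> ^ 1 * \<bar>real_of_int q\<bar> ^ 3 \<le> 1/4 * (1 + real_of_int \<bar>p\<bar>) ^ 4 + 3/4 * (1 + real_of_int \<bar>q\<bar>) ^ 4" for p q :: int
    using young13[of "\<bar>real_of_int p\<bar>" "\<bar>real_of_int q\<bar>"] by simp
  have y11: "\<bar>real_of_int p\<bar> ^ 1 * \<bar>real_of_int q\<bar> ^ 1 \<le> 1/2 * (1 + real_of_int \<bar>p\<bar>) ^ 4 + 1/2 * (1 + real_of_int \<bar>q\<bar>) ^ 4" for p q :: int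
    using young11[of "\<bar>real_of_int p\<bar>" "\<bar>real_of_int q\<bar>"] by simp
  let ?F0 = "anorm 0 lam f" and ?F4 = "anorm 4 lam f" and ?Z0 = "anorm 0 lam zapp" and ?Z4 = "anorm 4 lam zapp"
  note T = term_WB[OF _ _ _ _ lam]
  have T1: "in_L1T (\<lambda>x. f x * dx 4 f x) \<and> WB lam (fcoeff (\<lambda>x. f x * dx 4 f x)) (0 * ?F4 * ?F0 + 1 * ?F0 * ?F4)"
    by (rule T[OF Lf cdx0 Af Af]) (use y04 in auto)
  have T2: "in_L1T (\<lambda>x. dx 1 f x * dx 3 f x) \<and> WB lam (fcoeff (\<lambda>x. dx 1 f x * dx 3 f x)) (1/4 * ?F4 * ?F0 + 3/4 * ?F0 * ?F4)"
    by (rule T[OF d1f Af Af]) (use y13 in auto)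
  have T3: "in_L1T (\<lambda>x. f x * dx 4 zapp x) \<and> WB lam (fcoeff (\<lambda>x. f x * dx 4 zapp x)) (0 * ?F4 * ?Z0 + 1 * ?F0 * ?Z4)"
    by (rule T[OF Lf cdx0 Af Az]) (use y04 in auto)
  have T4: "in_L1T (\<lambda>x. zapp x * dx 4 f x) \<and> WB lam (fcoeff (\<lambda>x. zapp x * dx 4 f x)) (0 * ?Z4 * ?F0 + 1 * ?Z0 * ?F4)"
    by (rule T[OF Lz cdx0 Az Af]) (use y04 in auto)
  have T5: "in_L1T (\<lambda>x. dx 1 f x * dx 3 zapp x) \<and> WB lam (fcoeff (\<lambda>x. dx 1 f x * dx 3 zapp x)) (1/4 * ?F4 * ?Z0 + 3/4 * ?F0 * ?Z4)"
    by (rule T[OF d1f Af Az]) (use y13 in auto)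
  have T6: "in_L1T (\<lambda>x. dx 1 zapp x * dx 3 f x) \<and> WB lam (fcoeff (\<lambda>x. dx 1 zapp x * dx 3 f x)) (1/4 * ?Z4 * ?F0 + 3/4 * ?Z0 * ?F4)"
    by (rule T[OF d1z Az Af]) (use y13 in auto)
  have S1: "in_L1T (\<lambda>x. f x * dx 2 f x) \<and> WB lam (fcoeff (\<lambda>x. f x * dx 2 f x)) (0 * ?F4 * ?F0 + 1 * ?F0 * ?F4)"
    by (rule T[OF Lf cdx0 Af Af]) (use y02 in auto)
  have S2: "in_L1T (\<lambda>x. dx 1 f x * dx 1 f x) \<and> WB lam (fcoeff (\<lambda>x. dx 1 f x * dx 1 f x)) (1/2 * ?F4 * ?F0 + 1/2 * ?F0 * ?F4)"
    by (rule T[OF d1f Af Af]) (use y11 in auto)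
  have S3: "in_L1T (\<lambda>x. f x * dx 2 zapp x) \<and> WB lam (fcoeff (\<lambda>x. f x * dx 2 zapp x)) (0 * ?F4 * ?Z0 + 1 * ?F0 * ?Z4)"
    by (rule T[OF Lf cdx0 Af Az]) (use y02 in auto)
  have S4: "in_L1T (\<lambda>x. dx 1 f x * dx 1 zapp x) \<and> WB lam (fcoeff (\<lambda>x. dx 1 f x * dx 1 zapp x)) (1/2 * ?F4 * ?Z0 + 1/2 * ?F0 * ?Z4)"
    by (rule T[OF d1f Af Az]) (use y11 in auto)
  have S5: "in_L1T (\<lambda>x. zapp x * dx 2 f x) \<and> WB lam (fcoeff (\<lambda>x. zapp x * dx 2 f x)) (0 * ?Z4 * ?F0 + 1 * ?Z0 * ?F4)"
    by (rule T[OF Lz cdx0 Az Af]) (use y02 in auto)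
  have N1e: "N1 f zapp = (\<lambda>x. f x * dx 4 f x + dx 1 f x * dx 3 f x + f x * dx 4 zapp x + zapp x * dx 4 f x
      + dx 1 f x * dx 3 zapp x + dx 1 zapp x * dx 3 f x)"
    by (rule ext) (simp only: N1_def)
  have N2e: "N2 f zapp = (\<lambda>x. f x * dx 2 f x + dx 1 f x * dx 1 f x + f x * dx 2 zapp x + 2 * (dx 1 f x * dx 1 zapp x)
      + zapp x * dx 2 f x)"
    by (rule ext) (simp only: N2_def power2_eq_square mult.assoc)
  define B1 where "B1 = (0 * ?F4 * ?F0 + 1 * ?F0 * ?F4) + (1/4 * ?F4 * ?F0 + 3/4 * ?F0 * ?F4)
     + (0 * ?F4 * ?Z0 + 1 * ?F0 * ?Z4) + (0 * ?Z4 * ?F0 + 1 * ?Z0 * ?F4)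
     + (1/4 * ?F4 * ?Z0 + 3/4 * ?F0 * ?Z4) + (1/4 * ?Z4 * ?F0 + 3/4 * ?Z0 * ?F4)"
  define B2 where "B2 = (0 * ?F4 * ?F0 + 1 * ?F0 * ?F4) + (1/2 * ?F4 * ?F0 + 1/2 * ?F0 * ?F4)
     + (0 * ?F4 * ?Z0 + 1 * ?F0 * ?Z4) + 2 * (1/2 * ?F4 * ?Z0 + 1/2 * ?F0 * ?Z4)
     + (0 * ?Z4 * ?F0 + 1 * ?Z0 * ?F4)"
  have N1W: "in_L1T (N1 f zapp) \<and> WB lam (fcoeff (N1 f zapp)) B1"
    unfolding N1e B1_def
    by (intro WB_fun_add T1 T2 T3 T4 T5 T6)
  have N2W: "in_L1T (N2 f zapp) \<and> WB lam (fcoeff (N2 f zapp)) B2"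
    unfolding N2e B2_def
    by (intro WB_fun_add WB_fun_cmult2 S1 S2 S3 S4 S5)
  have inA1: "in_A 0 lam (N1 f zapp)" and n1: "anorm 0 lam (N1 f zapp) \<le> B1"
    using N1W unfolding in_A_def WB_def anorm_def by auto
  have inA2: "in_A 0 lam (N2 f zapp)" and n2: "anorm 0 lam (N2 f zapp) \<le> B2"
    using N2W unfolding in_A_def WB_def anorm_def by auto
  let ?M4 = "anorm 4 lam zMU"
  have tri: "?F4 \<le> ?M4 + ?Z4" unfolding zMU_def by (rule norm_tri_bound[OF Af Az])
  have nn: "0 \<le> ?F0" "0 \<le> ?F4" "0 \<le> ?Z0" "0 \<le> ?Z4" "0 \<le> ?M4" by (rule anorm_nonneg)+
  define R where "R = 2 * (?Z0 * ?F4 + (2 * ?Z4 + ?M4) * ?F0)"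
  have p: "?F0 * ?F4 \<le> ?F0 * ?M4 + ?F0 * ?Z4"
    using mult_left_mono[OF tri nn(1)] by (simp add: distrib_left)
  have B1R: "B1 \<le> R" unfolding B1_def R_def using p by (simp add: algebra_simps)
  have B2R: "B2 \<le> R" unfolding B2_def R_def using p by (simp add: algebra_simps)
  have e0: "0 \<le> eps / Bo" "0 \<le> eps" using assms by auto
  have "eps / Bo * anorm 0 lam (N1 f zapp) + eps * anorm 0 lam (N2 f zapp) \<le> eps / Bo * R + eps * R"
    using mult_left_mono[OF order_trans[OF n1 B1R] e0(1)] mult_left_mono[OF order_trans[OF n2 B2R] e0(2)]
    by simp
  also have "\<dots> = 2 * eps * (1 / Bo + 1) * (?Z0 * ?F4 + (2 * ?Z4 + ?M4) * ?F0)"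
    unfolding R_def by (simp add: algebra_simps)
  finally show ?thesis using inA1 inA2 unfolding lam_def by blast
qed


end
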